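(* Let $\mathbb{E}^\ast_n=\{(a,b)\in\mathbb{N}^2:1\le a+b\le n\}$ and define $\vec v:\mathbb{E}^\ast_n\to W$ by \[\vec v(a,b)=(\underbrace{1,\dots,1}_{a},\underbrace{0,\dots,0}_{n-a-b},\underbrace{-1,\dots,-1}_{b}).\] (a) The map $(a,b)\mapsto \mathbb{R}_{\ge0}\vec v(a,b)$ is a bijection from $\mathbb{E}^\ast_n$ onto the set of extreme rays of $I(\mathfrak{gl}_n,V\oplus\bigwedge^2)$. (b) For $S\subseteq[n]$, the extreme rays lying in the chamber $C(S)$ are exactly those generated by $\vec v(\pi_\ell^S,\ell-\pi_\ell^S)$ for $\ell=1,\dots,n$, where $\pi_\ell^S=|S\cap[n-\ell+1,\infty)|$.
   Context: Identify the diagonal Cartan subalgebra of $\mathfrak{gl}_n$ with $\mathbb{R}^n$ with coordinates $x_1,\dots,x_n$. Let $W=\{x_1\ge\cdots\ge x_n\}$ and $W^0=\{x_1>\cdots>x_n\}$. For $1\le i\le j\le n$ let $\lambda_{i,j}^\perp$ be the hyperplane $x_i+x_j=0$ (for $i=j$: $x_i=0$); $I(\mathfrak{gl}_n,V\oplus\bigwedge^2)$ is the arrangement of these hyperplanes restricted to $W$. Chambers are the closures of the connected components of $W^0\setminus\bigcup\lambda_{i,j}^\perp$; a face is a chamber or the intersection of a chamber with a supporting hyperplane; an extreme ray is a face that is a half-line. For $S=\{a_1>\cdots>a_k\}\subseteq[n]$, $C(S)$ is the subset of $W$ on which, for $1\le i\le j\le n$, $x_i+x_j\ge0$ if $i\le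 k$ and $j\le i+a_i-1$, and $x_i+x_j\le0$ otherwise (row $i$ of the right-justified sign tableau of the $x_i+x_j$ has $a_i$ plus signs for $i\le k$, none for $i>k$); these are exactly the chambers. *)

theory Defs
  imports "HOL-Analysis.Analysis"
begin

text \<open>Points of R^n are functions nat => real vanishing outside the index set {1..n};
  nat => real carries the product topology (HOL-Analysis Function_Topology), whose
  restriction to this subspace is the Euclidean topology of R^n.\<close>

definition Rn :: "nat \<Rightarrow> (nat \<Rightarrow> real) set" where
  "Rn n = {x. \<forall>i. (i < 1 \<or> n < i) \<longrightarrow> x i = 0}"

definition Weyl :: "nat \<Rightarrow> (nat \<Rightarrow> real) set" where
  "Weyl n = {x \<in> Rn n. \<forall>i j. 1 \<le> i \<longrightarrow> i \<le> j \<longrightarrow> j \<le> n \<longrightarrow> x j \<le> x i}"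

definition Weyl0 :: "nat \<Rightarrow> (nat \<Rightarrow> real) set" where
  "Weyl0 n = {x \<in> Rn n. \<forall>i j. 1 \<le> i \<longrightarrow> i < j \<longrightarrow> j \<le> n \<longrightarrow> x j < x i}"

definition hyp :: "nat \<Rightarrow> nat \<Rightarrow> nat \<Rightarrow> (nat \<Rightarrow> real) set" where
  "hyp n i j = {x \<in> Rn n. x i + x j = 0}"

definition complement_set :: "nat \<Rightarrow> (nat \<Rightarrow> real) set" where
  "complement_set n = Weyl0 n - (\<Union>{hyp n i j | i j. 1 \<le> i \<and> i \<le> j \<and> j \<le> n})"

definition chambers :: "nat \<Rightarrow> (nat \<Rightarrow> real) set set" where
  "chambers n = {closure (connected_component_set (complement_set n) x) | x. x \<in> complement_set n}"

definition is_face :: "nat \<Rightarrow> (nat \<Rightarrow> real) set \<Rightarrow> bool" where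
  "is_face n F \<longleftrightarrow> (\<exists>C \<in> chambers n. F = C \<or>
     (\<exists>(c :: nat \<Rightarrow> real) (d :: real). (\<exists>i\<in>{1..n}. c i \<noteq> 0) \<and>
        (\<forall>x\<in>C. (\<Sum>i=1..n. c i * x i) \<le> d) \<and>
        (\<exists>x\<in>C. (\<Sum>i=1..n. c i * x i) = d) \<and>
        F = {x \<in> C. (\<Sum>i=1..n. c i * x i) = d}))"

definition is_half_line :: "nat \<Rightarrow> (nat \<Rightarrow> real) set \<Rightarrow> bool" where
  "is_half_line n F \<longleftrightarrow> (\<exists>p \<in> Rn n. \<exists>v \<in> Rn n. v \<noteq> (\<lambda>_. 0) \<and>
      F = {(\<lambda>i. p i + t * v i) | t. t \<ge> 0})"

definition extreme_rays :: "nat \<Rightarrow> (nat \<Rightarrow> real) set set" where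
  "extreme_rays n = {F. is_face n F \<and> is_half_line n F}"

definition ray :: "(nat \<Rightarrow> real) \<Rightarrow> (nat \<Rightarrow> real) set" where
  "ray v = {(\<lambda>i. t * v i) | t. t \<ge> 0}"

definition Estar :: "nat \<Rightarrow> (nat \<times> nat) set" where
  "Estar n = {(a, b). 1 \<le> a + b \<and> a + b \<le> n}"

definition vv :: "nat \<Rightarrow> nat \<Rightarrow> nat \<Rightarrow> (nat \<Rightarrow> real)" where
  "vv n a b = (\<lambda>i. if 1 \<le> i \<and> i \<le> a then 1
                   else if n - b < i \<and> i \<le> n then -1 else 0)"

text \<open>For S = {a_1 > ... > a_k}, a_i is the i-th largest element of S.\<close>
definition Sel :: "nat set \<Rightarrow> nat \<Rightarrow> nat" where
  "Sel S i = rev (sorted_list_of_set S) ! (i - 1)"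

definition CS :: "nat \<Rightarrow> nat set \<Rightarrow> (nat \<Rightarrow> real) set" where
  "CS n S = {x \<in> Weyl n. \<forall>i j. 1 \<le> i \<longrightarrow> i \<le> j \<longrightarrow> j \<le> n \<longrightarrow>
      (if i \<le> card S \<and> j + 1 \<le> i + Sel S i then 0 \<le> x i + x j else x i + x j \<le> 0)}"

definition piS :: "nat \<Rightarrow> nat set \<Rightarrow> nat \<Rightarrow> nat" where
  "piS n S l = card (S \<inter> {n - l + 1..})"

end

theory Submission
  imports Defs
begin


definition Kset :: "nat \<Rightarrow> (nat \<Rightarrow> real) \<Rightarrow> (nat \<Rightarrow> real) set" where
  "Kset n x = {y \<in> Weyl n. \<forall>i j. 1 \<le> i \<longrightarrow> i \<le> j \<longrightarrow> j \<le> n \<longrightarrow>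
      (0 < x i + x j \<longrightarrow> 0 \<le> y i + y j) \<and> (x i + x j < 0 \<longrightarrow> y i + y j \<le> 0)}"

definition Oset :: "nat \<Rightarrow> (nat \<Rightarrow> real) \<Rightarrow> (nat \<Rightarrow> real) set" where
  "Oset n x = {y \<in> complement_set n. \<forall>i j. 1 \<le> i \<longrightarrow> i \<le> j \<longrightarrow> j \<le> n \<longrightarrow>
      (0 < x i + x j \<longleftrightarrow> 0 < y i + y j)}"

lemma comp_iff: "y \<in> complement_set n \<longleftrightarrow> y \<in> Weyl0 n \<and>
   (\<forall>i j. 1 \<le> i \<longrightarrow> i \<le> j \<longrightarrow> j \<le> n \<longrightarrow> y i + y j \<noteq> 0)"
  unfolding complement_set_def hyp_def Weyl0_def by blast

lemma cont_pair: "continuous_on S (\<lambda>z::nat\<Rightarrow>real. z i + z j)"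
  by (intro continuous_intros continuous_on_product_then_coordinatewise continuous_on_id)

lemma comp_sub_O:
  assumes x: "x \<in> complement_set n"
  shows "connected_component_set (complement_set n) x \<subseteq> Oset n x"
proof
  fix y assume y: "y \<in> connected_component_set (complement_set n) x"
  let ?C = "connected_component_set (complement_set n) x"
  have yA: "y \<in> complement_set n" using y connected_component_subset by blast
  have xC: "x \<in> ?C" using x by (simp add: connected_component_refl)
  show "y \<in> Oset n x" unfolding Oset_def
  proof (intro CollectI conjI allI impI yA)
    fix i j assume ij: "1 \<le> i" "i \<le> j" "j \<le> n"
    let ?g = "\<lambda>z::nat\<Rightarrow>real. z i + z j"
    have conn: "connected (?g ` ?C)"
      by (rule connected_continuous_image[OF cont_pair]) simp
    have nz: "\<And>z. z \<in> ?C \<Longrightarrow> ?g z \<noteq> 0"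
      using connected_component_subset ij comp_iff by blast
    have "\<not> (?g x < 0 \<and> 0 < ?g y)" "\<not> (?g y < 0 \<and> 0 < ?g x)"
    proof -
      { fix p q assume "p \<in> ?C" "q \<in> ?C" "?g p < 0" "0 < ?g q"
        then have "0 \<in> ?g ` ?C"
          using conn[unfolded connected_iff_interval, rule_format, of "?g p" "?g q" 0]
          by auto
        then have False using nz by force }
      then show "\<not> (?g x < 0 \<and> 0 < ?g y)" "\<not> (?g y < 0 \<and> 0 < ?g x)"
        using xC y by blast+
    qed
    moreover have "?g x \<noteq> 0" "?g y \<noteq> 0" using nz xC y by auto
    ultimately show "0 < x i + x j \<longleftrightarrow> 0 < y i + y j" by linarith
  qed
qed

lemma conv_sign:
  fixes p q t :: real
  assumes "p \<noteq> 0" "q \<noteq> 0" "0 < p \<longleftrightarrow> 0 < q" "0 \<le> t" "t \<le> 1"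
  shows "(0 < p \<and> 0 < (1-t)*p + t*q) \<or> (p < 0 \<and> (1-t)*p + t*q < 0)"
proof (cases "0 < p")
  case True
  then have q: "0 < q" using assms by auto
  have "0 \<le> (1-t)*p" "0 \<le> t*q" using True q assms by auto
  moreover have "0 < (1-t)*p \<or> 0 < t*q" using True q assms
    by (cases "t = 1") auto
  ultimately show ?thesis using True by linarith
next
  case False
  then have p: "p < 0" and q: "q < 0" using assms by auto
  have "(1-t)*p \<le> 0" "t*q \<le> 0" using p q assms
    by (auto simp: mult_nonneg_nonpos)
  moreover have "(1-t)*p < 0 \<or> t*q < 0" using p q assms
    by (cases "t = 1") (auto simp: mult_pos_neg)
  ultimately show ?thesis using p by linarith
qed

definition seg :: "(nat \<Rightarrow> real) \<Rightarrow> (nat \<Rightarrow> real) \<Rightarrow> real \<Rightarrow> (nat \<Rightarrow> real)" where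
  "seg x y t = (\<lambda>i. (1 - t) * x i + t * y i)"

lemma cont_seg: "continuous_on S (seg x y)"
  unfolding seg_def by (intro continuous_intros)

lemma seg_O:
  assumes x: "x \<in> Oset n x" and y: "y \<in> Oset n x" and t: "0 \<le> t" "t \<le> 1"
  shows "seg x y t \<in> Oset n x"
proof -
  have xW: "x \<in> Weyl0 n" and yW: "y \<in> Weyl0 n"
    using x y unfolding Oset_def comp_iff by auto
  have xs: "\<forall>i j. 1 \<le> i \<longrightarrow> i \<le> j \<longrightarrow> j \<le> n \<longrightarrow> x i + x j \<noteq> 0"
    using x unfolding Oset_def comp_iff by auto
  have ys: "\<forall>i j. 1 \<le> i \<longrightarrow> i \<le> j \<longrightarrow> j \<le> n \<longrightarrow> (0 < x i + x j \<longleftrightarrow> 0 < y i + y j)"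
    using y unfolding Oset_def by auto
  have R: "seg x y t \<in> Rn n" using xW yW unfolding Weyl0_def Rn_def seg_def by auto
  have W: "seg x y t \<in> Weyl0 n"
  proof -
    { fix i j :: nat assume "1 \<le> i" "i < j" "j \<le> n"
      then have "x j < x i" "y j < y i" using xW yW unfolding Weyl0_def by auto
      then have "(1 - t) * x j + t * y j < (1 - t) * x i + t * y i"
        using t by (cases "t = 1") (auto intro!: add_less_le_mono mult_strict_left_mono mult_left_mono) }
    then show ?thesis using R unfolding Weyl0_def seg_def by auto
  qed
  have S: "0 < x i + x j \<longleftrightarrow> 0 < seg x y t i + seg x y t j" "seg x y t i + seg x y t j \<noteq> 0"
    if "1 \<le> i" "i \<le> j" "j \<le> n" for i j
  proof -
    have e: "seg x y t i + seg x y t j = (1 - t) * (x i + x j) + t * (y i + y j)"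
      unfolding seg_def by (simp add: algebra_simps)
    have "x i + x j \<noteq> 0" using xs that by auto
    moreover have "0 < x i + x j \<longleftrightarrow> 0 < y i + y j" using ys that by auto
    moreover have "y i + y j \<noteq> 0" using y that unfolding Oset_def comp_iff by auto
    ultimately have "(0 < x i + x j \<and> 0 < seg x y t i + seg x y t j) \<or>
          (x i + x j < 0 \<and> seg x y t i + seg x y t j < 0)"
      unfolding e using t conv_sign by blast
    then show "0 < x i + x j \<longleftrightarrow> 0 < seg x y t i + seg x y t j" "seg x y t i + seg x y t j \<noteq> 0"
      by auto
  qed
  show ?thesis unfolding Oset_def comp_iff using W S by auto
qed

lemma O_connected:
  assumes x: "x \<in> complement_set n"
  shows "connected (Oset n x)"
proof -
  have xO: "x \<in> Oset n x" using x unfolding Oset_def by auto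
  have eq: "Oset n x = \<Union>{seg x y ` {0..1} | y. y \<in> Oset n x}"
  proof
    show "Oset n x \<subseteq> \<Union>{seg x y ` {0..1} | y. y \<in> Oset n x}"
    proof
      fix y assume "y \<in> Oset n x"
      moreover have "seg x y 1 = y" unfolding seg_def by simp
      ultimately show "y \<in> \<Union>{seg x y ` {0..1} | y. y \<in> Oset n x}"
        by (smt (verit) UnionI atLeastAtMost_iff image_eqI mem_Collect_eq)
    qed
    show "\<Union>{seg x y ` {0..1} | y. y \<in> Oset n x} \<subseteq> Oset n x"
      using seg_O[OF xO] by auto
  qed
  have "connected (\<Union>{seg x y ` {0..1} | y. y \<in> Oset n x})"
  proof (rule connected_Union)
    show "\<And>s. s \<in> {seg x y ` {0..1} |y. y \<in> Oset n x} \<Longrightarrow> connected s"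
      using connected_continuous_image[OF cont_seg connected_Icc] by auto
    have "seg x y 0 = x" for y unfolding seg_def by simp
    then have "x \<in> \<Inter>{seg x y ` {0..1} |y. y \<in> Oset n x}"
      by (smt (verit) InterI atLeastAtMost_iff image_eqI mem_Collect_eq)
    then show "\<Inter>{seg x y ` {0..1} |y. y \<in> Oset n x} \<noteq> {}" by blast
  qed
  then show ?thesis using eq by simp
qed

lemma comp_eq_O:
  assumes x: "x \<in> complement_set n"
  shows "connected_component_set (complement_set n) x = Oset n x"
proof
  show "connected_component_set (complement_set n) x \<subseteq> Oset n x" by (rule comp_sub_O[OF x])
  show "Oset n x \<subseteq> connected_component_set (complement_set n) x"
    by (rule connected_component_maximal) (use x O_connected[OF x] in \<open>auto simp: Oset_def\<close>)
qed

lemma closed_K: "closed (Kset n x)"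
proof -
  have e: "Kset n x = (\<Inter>i\<in>{i. i < 1 \<or> n < i}. {y. y i = 0}) \<inter>
     (\<Inter>(i,j)\<in>{(i,j). 1 \<le> i \<and> i \<le> j \<and> j \<le> n}. {y. y j \<le> y i}) \<inter>
     (\<Inter>(i,j)\<in>{(i,j). 1 \<le> i \<and> i \<le> j \<and> j \<le> n \<and> 0 < x i + x j}. {y. 0 \<le> y i + y j}) \<inter>
     (\<Inter>(i,j)\<in>{(i,j). 1 \<le> i \<and> i \<le> j \<and> j \<le> n \<and> x i + x j < 0}. {y. y i + y j \<le> 0})"
    unfolding Kset_def Weyl_def Rn_def by auto
  have c1: "continuous_on UNIV (\<lambda>y::nat\<Rightarrow>real. y i)" for i by simp
  show ?thesis unfolding e
    by (intro closed_Int closed_INT ballI; clarsimp;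
        intro closed_Collect_le closed_Collect_eq continuous_on_const cont_pair c1)
qed

lemma O_sub_K: "Oset n x \<subseteq> Kset n x"
proof
  fix y assume y: "y \<in> Oset n x"
  then have "y \<in> Weyl0 n" unfolding Oset_def comp_iff by auto
  then have "y \<in> Weyl n" unfolding Weyl0_def Weyl_def by (auto simp: le_less)
  moreover have "\<forall>i j. 1 \<le> i \<longrightarrow> i \<le> j \<longrightarrow> j \<le> n \<longrightarrow>
      (0 < x i + x j \<longrightarrow> 0 \<le> y i + y j) \<and> (x i + x j < 0 \<longrightarrow> y i + y j \<le> 0)"
    using y unfolding Oset_def by force
  ultimately show "y \<in> Kset n x" unfolding Kset_def by auto
qed

lemma K_sub_closure:
  assumes x: "x \<in> complement_set n"
  shows "Kset n x \<subseteq> closure (Oset n x)"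
proof
  fix y assume y: "y \<in> Kset n x"
  have xO: "x \<in> Oset n x" using x unfolding Oset_def by auto
  have "seg y x ` {0<..1} \<subseteq> Oset n x"
  proof
    fix z assume "z \<in> seg y x ` {0<..1}"
    then obtain t where t: "0 < t" "t \<le> 1" and z: "z = seg y x t" by auto
    have xW: "x \<in> Weyl0 n" and yW: "y \<in> Weyl n"
      using x y unfolding Kset_def comp_iff by auto
    have xs: "\<forall>i j. 1 \<le> i \<longrightarrow> i \<le> j \<longrightarrow> j \<le> n \<longrightarrow> x i + x j \<noteq> 0"
      using x unfolding comp_iff by auto
    have R: "z \<in> Rn n" using xW yW unfolding Weyl0_def Weyl_def Rn_def seg_def z by auto
    have W: "z \<in> Weyl0 n"
    proof -
      { fix i j :: nat assume "1 \<le> i" "i < j" "j \<le> n"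
        then have "x j < x i" "y j \<le> y i" using xW yW unfolding Weyl0_def Weyl_def by auto
        then have "(1 - t) * y j + t * x j < (1 - t) * y i + t * x i"
          using t by (intro add_le_less_mono mult_left_mono mult_strict_left_mono) auto }
      then show ?thesis using R unfolding Weyl0_def seg_def z by auto
    qed
    have S: "(0 < x i + x j \<longleftrightarrow> 0 < z i + z j) \<and> z i + z j \<noteq> 0"
      if ij: "1 \<le> i" "i \<le> j" "j \<le> n" for i j
    proof -
      have e: "z i + z j = (1 - t) * (y i + y j) + t * (x i + x j)"
        unfolding seg_def z by (simp add: algebra_simps)
      have nz: "x i + x j \<noteq> 0" using xs ij by auto
      have yk: "(0 < x i + x j \<longrightarrow> 0 \<le> y i + y j) \<and> (x i + x j < 0 \<longrightarrow> y i + y j \<le> 0)"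
        using y ij unfolding Kset_def by auto
      have a: "0 \<le> 1 - t" using t by simp
      show ?thesis
      proof (cases "0 < x i + x j")
        case True
        then have "0 \<le> (1 - t) * (y i + y j)" "0 < t * (x i + x j)" using yk a t by auto
        then show ?thesis using True e by linarith
      next
        case False
        then have n: "x i + x j < 0" using nz by linarith
        then have "(1 - t) * (y i + y j) \<le> 0" "t * (x i + x j) < 0" using yk a t
          by (auto simp: mult_nonneg_nonpos mult_pos_neg)
        then show ?thesis using False e by linarith
      qed
    qed
    show "z \<in> Oset n x" unfolding Oset_def comp_iff using W S by auto
  qed
  then have "seg y x ` closure {0<..1} \<subseteq> closure (Oset n x)"
    by (intro image_closure_subset cont_seg closed_closure) (use closure_subset in blast)
  moreover have "seg y x 0 = y" unfolding seg_def by simp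
  ultimately show "y \<in> closure (Oset n x)" by force
qed

lemma chamber_eq:
  assumes x: "x \<in> complement_set n"
  shows "closure (connected_component_set (complement_set n) x) = Kset n x"
  unfolding comp_eq_O[OF x]
  using K_sub_closure[OF x] closure_minimal[OF O_sub_K closed_K] by blast

lemma chambers_eq: "chambers n = {Kset n x | x. x \<in> complement_set n}"
  unfolding chambers_def using chamber_eq by auto

lemma K_Rn: "y \<in> Kset n x \<Longrightarrow> y \<in> Rn n"
  unfolding Kset_def Weyl_def by auto

lemma K_zero_out: "y \<in> Kset n x \<Longrightarrow> (i < 1 \<or> n < i) \<Longrightarrow> y i = 0"
  using K_Rn unfolding Rn_def by auto

lemma K_map:
  fixes \<phi> :: "real \<Rightarrow> real"
  assumes y: "y \<in> Kset n x" and mono: "\<And>s t. s \<le> t \<Longrightarrow> \<phi> s \<le> \<phi> t"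
    and odd: "\<And>s. \<phi> (- s) = - \<phi> s"
  shows "(\<lambda>i. \<phi> (y i)) \<in> Kset n x"
proof -
  have z: "\<phi> 0 = 0" using odd[of 0] by simp
  have 1: "0 \<le> \<phi> a + \<phi> b" if "0 \<le> a + b" for a b
  proof -
    have "- b \<le> a" using that by simp
    then have "\<phi> (- b) \<le> \<phi> a" by (rule mono)
    then show ?thesis using odd by simp
  qed
  have 2: "\<phi> a + \<phi> b \<le> 0" if "a + b \<le> 0" for a b
  proof -
    have "a \<le> - b" using that by simp
    then have "\<phi> a \<le> \<phi> (- b)" by (rule mono)
    then show ?thesis using odd by simp
  qed
  show ?thesis using y z unfolding Kset_def Weyl_def Rn_def
    by (auto intro: 1 2 mono)
qed

lemma K_scale:
  assumes y: "y \<in> Kset n x" and t: "0 \<le> t"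
  shows "(\<lambda>i. t * y i) \<in> Kset n x"
  using y t unfolding Kset_def Weyl_def Rn_def
  by (auto simp: distrib_left[symmetric] mult_left_mono mult_nonneg_nonpos)

lemma K_pointed:
  assumes x: "x \<in> complement_set n" and y: "y \<in> Kset n x" and my: "(\<lambda>i. - y i) \<in> Kset n x"
  shows "y = (\<lambda>_. 0)"
proof
  fix i
  show "y i = 0"
  proof (cases "1 \<le> i \<and> i \<le> n")
    case True
    have "x i + x i \<noteq> 0" using x True unfolding comp_iff by auto
    have a: "(0 < x i + x i \<longrightarrow> 0 \<le> y i + y i) \<and> (x i + x i < 0 \<longrightarrow> y i + y i \<le> 0)"
      using y True unfolding Kset_def by blast
    have b: "(0 < x i + x i \<longrightarrow> 0 \<le> - y i + - y i) \<and> (x i + x i < 0 \<longrightarrow> - y i + - y i \<le> 0)"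
      using my True unfolding Kset_def by blast
    show ?thesis using a b \<open>x i + x i \<noteq> 0\<close> by linarith
  next
    case False
    then show ?thesis using K_zero_out[OF y] by auto
  qed
qed

definition lin :: "nat \<Rightarrow> (nat \<Rightarrow> real) \<Rightarrow> (nat \<Rightarrow> real) \<Rightarrow> real" where
  "lin n c y = (\<Sum>i=1..n. c i * y i)"

lemma lin_scale: "lin n c (\<lambda>i. t * y i) = t * lin n c y"
  unfolding lin_def by (simp add: sum_distrib_left algebra_simps)

lemma lin_comb: "lin n c (\<lambda>i. t * u i + r i) = t * lin n c u + lin n c r"
  unfolding lin_def by (simp add: sum_distrib_left sum.distrib algebra_simps)

lemma face_props:
  assumes x: "x \<in> complement_set n"
    and F: "F = Kset n x \<or> (\<exists>c d. (\<forall>y\<in>Kset n x. lin n c y \<le> d) \<and> (\<exists>y\<in>Kset n x. lin n c y = d)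
             \<and> F = {y \<in> Kset n x. lin n c y = d})"
  shows "F \<subseteq> Kset n x"
    and "\<And>y t. y \<in> F \<Longrightarrow> 0 \<le> t \<Longrightarrow> (\<lambda>i. t * y i) \<in> F"
    and "\<And>u r \<tau>. u \<in> Kset n x \<Longrightarrow> r \<in> Kset n x \<Longrightarrow> 0 < \<tau> \<Longrightarrow> (\<lambda>i. \<tau> * u i + r i) \<in> F \<Longrightarrow> u \<in> F"
proof -
  have P: "F \<subseteq> Kset n x \<and> (\<forall>y t. y \<in> F \<longrightarrow> 0 \<le> t \<longrightarrow> (\<lambda>i. t * y i) \<in> F) \<and>
     (\<forall>u r \<tau>. u \<in> Kset n x \<longrightarrow> r \<in> Kset n x \<longrightarrow> 0 < \<tau> \<longrightarrow> (\<lambda>i. \<tau> * u i + r i) \<in> F \<longrightarrow> u \<in> F)"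
  proof (cases "F = Kset n x")
    case True
    then show ?thesis using K_scale by auto
  next
    case False
    then obtain c d where le: "\<forall>y\<in>Kset n x. lin n c y \<le> d" and ex: "\<exists>y\<in>Kset n x. lin n c y = d"
      and Fe: "F = {y \<in> Kset n x. lin n c y = d}" using F by blast
    obtain y0 where y0: "y0 \<in> Kset n x" "lin n c y0 = d" using ex by blast
    have "lin n c (\<lambda>i. 2 * y0 i) \<le> d" using le K_scale[OF y0(1), of 2] by auto
    then have d1: "d \<le> 0" using y0 lin_scale[of n c 2 y0] by simp
    have "lin n c (\<lambda>i. 0 * y0 i) \<le> d" using le K_scale[OF y0(1), of 0] by auto
    then have d2: "0 \<le> d" using lin_scale[of n c 0 y0] by simp
    have d: "d = 0" using d1 d2 by simp
    show ?thesis
    proof (intro conjI allI impI)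
      show "F \<subseteq> Kset n x" using Fe by auto
      fix y and t :: real assume "y \<in> F" "0 \<le> t"
      then show "(\<lambda>i. t * y i) \<in> F" using Fe d K_scale lin_scale by auto
    next
      fix u r \<tau> assume u: "u \<in> Kset n x" and r: "r \<in> Kset n x" and t: "0 < \<tau>"
        and ur: "(\<lambda>i. \<tau> * u i + r i) \<in> F"
      have "\<tau> * lin n c u + lin n c r = 0" using ur Fe d lin_comb by auto
      moreover have "lin n c u \<le> 0" "lin n c r \<le> 0" using le u r d by auto
      ultimately have "\<tau> * lin n c u = 0"
        by (smt (verit) mult_nonneg_nonpos t)
      then have "lin n c u = 0" using t by simp
      then show "u \<in> F" using Fe u d by auto
    qed
  qed
  then show "F \<subseteq> Kset n x"
    and "\<And>y t. y \<in> F \<Longrightarrow> 0 \<le> t \<Longrightarrow> (\<lambda>i. t * y i) \<in> F"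
    and "\<And>u r \<tau>. u \<in> Kset n x \<Longrightarrow> r \<in> Kset n x \<Longrightarrow> 0 < \<tau> \<Longrightarrow> (\<lambda>i. \<tau> * u i + r i) \<in> F \<Longrightarrow> u \<in> F"
    by blast+
qed

lemma init_seg:
  assumes T: "T \<subseteq> {1..n}" and dc: "\<And>i j. i \<in> T \<Longrightarrow> 1 \<le> j \<Longrightarrow> j \<le> i \<Longrightarrow> j \<in> T"
  shows "T = {1..card T}"
proof (cases "T = {}")
  case True then show ?thesis by simp
next
  case False
  have fin: "finite T" using T finite_subset by blast
  define m where "m = Max T"
  have m: "m \<in> T" using fin False m_def by simp
  have "T = {1..m}"
  proof
    show "T \<subseteq> {1..m}" using T fin m_def by auto
    show "{1..m} \<subseteq> T" using dc m by auto
  qed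
  then show ?thesis by simp
qed

lemma final_seg:
  assumes T: "T \<subseteq> {1..n}" and uc: "\<And>i j. i \<in> T \<Longrightarrow> j \<le> n \<Longrightarrow> i \<le> j \<Longrightarrow> j \<in> T"
  shows "T = {n - card T<..n}"
proof (cases "T = {}")
  case True then show ?thesis by simp
next
  case False
  have fin: "finite T" using T finite_subset by blast
  define m where "m = Min T"
  have m: "m \<in> T" using fin False m_def by simp
  have m1: "1 \<le> m" "m \<le> n" using m T by auto
  have Te: "T = {m..n}"
  proof
    show "T \<subseteq> {m..n}" using T fin m_def by auto
    show "{m..n} \<subseteq> T" using uc m by auto
  qed
  then have "card T = n + 1 - m" by simp
  then show ?thesis using Te m1 by auto
qed

lemma sgn_vv:
  assumes w: "w \<in> Weyl n"
  defines "a \<equiv> card {i\<in>{1..n}. 0 < w i}" and "b \<equiv> card {i\<in>{1..n}. w i < 0}"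
  shows "(\<lambda>i. sgn (w i)) = vv n a b" and "a + b \<le> n"
proof -
  let ?P = "{i\<in>{1..n}. 0 < w i}" and ?N = "{i\<in>{1..n}. w i < 0}"
  have wd: "\<And>i j. 1 \<le> i \<Longrightarrow> i \<le> j \<Longrightarrow> j \<le> n \<Longrightarrow> w j \<le> w i" using w unfolding Weyl_def by auto
  have wz: "\<And>i. i < 1 \<or> n < i \<Longrightarrow> w i = 0" using w unfolding Weyl_def Rn_def by auto
  have P: "?P = {1..a}" unfolding a_def
  proof (rule init_seg[of _ n])
    fix i j assume "i \<in> ?P" "1 \<le> j" "j \<le> i"
    then show "j \<in> ?P" using wd[of j i] by auto
  qed auto
  have N: "?N = {n - b<..n}" unfolding b_def
  proof (rule final_seg[of _ n])
    fix i j assume "i \<in> ?N" "j \<le> n" "i \<le> j"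
    then show "j \<in> ?N" using wd[of i j] by auto
  qed auto
  have "card (?P \<union> ?N) \<le> card {1..n}" by (rule card_mono) auto
  moreover have "card (?P \<union> ?N) = a + b" unfolding a_def b_def
    by (rule card_Un_disjoint) auto
  ultimately show ab: "a + b \<le> n" by simp
  show "(\<lambda>i. sgn (w i)) = vv n a b"
  proof
    fix i
    show "sgn (w i) = vv n a b i"
    proof (cases "1 \<le> i \<and> i \<le> n")
      case False
      then show ?thesis using wz[of i] ab unfolding vv_def by auto
    next
      case True
      have iP: "i \<in> ?P \<longleftrightarrow> 1 \<le> i \<and> i \<le> a" using P by auto
      have iN: "i \<in> ?N \<longleftrightarrow> n - b < i \<and> i \<le> n" using N by auto
      show ?thesis
      proof (cases "0 < w i")
        case True then show ?thesis using iP \<open>1 \<le> i \<and> i \<le> n\<close> unfolding vv_def by auto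
      next
        case nf: False
        show ?thesis
        proof (cases "w i < 0")
          case True then show ?thesis using iP iN nf \<open>1 \<le> i \<and> i \<le> n\<close> unfolding vv_def by auto
        next
          case False then show ?thesis using iP iN nf \<open>1 \<le> i \<and> i \<le> n\<close> unfolding vv_def by auto
        qed
      qed
    qed
  qed
qed

definition soft :: "real \<Rightarrow> real \<Rightarrow> real" where
  "soft \<tau> s = (if \<tau> \<le> s then s - \<tau> else if s \<le> - \<tau> then s + \<tau> else 0)"

lemma soft_mono: "0 < \<tau> \<Longrightarrow> s \<le> t \<Longrightarrow> soft \<tau> s \<le> soft \<tau> t"
  unfolding soft_def by auto

lemma soft_odd: "0 < \<tau> \<Longrightarrow> soft \<tau> (- s) = - soft \<tau> s"
  unfolding soft_def by auto

lemma sgn_mono_real: "(s::real) \<le> t \<Longrightarrow> sgn s \<le> sgn t"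
  by (auto simp: sgn_real_def)

lemma ray_scale_eq:
  assumes "0 < s" "u = (\<lambda>i. s * w i)"
  shows "ray u = ray w"
proof
  show "ray u \<subseteq> ray w" unfolding ray_def using assms
    by auto (metis mult.assoc mult_nonneg_nonneg less_imp_le)
  show "ray w \<subseteq> ray u" unfolding ray_def
  proof
    fix z assume "z \<in> {(\<lambda>i. t * w i) |t. 0 \<le> t}"
    then obtain t where t: "0 \<le> t" "z = (\<lambda>i. t * w i)" by auto
    have "z = (\<lambda>i. (t / s) * u i)" using t assms by auto
    moreover have "0 \<le> t / s" using t assms by simp
    ultimately show "z \<in> {(\<lambda>i. t * u i) |t. 0 \<le> t}" by blast
  qed
qed

lemma extreme_char:
  assumes F: "F \<in> extreme_rays n"
  shows "\<exists>a b. (a, b) \<in> Estar n \<and> F = ray (vv n a b)"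
proof -
  have face: "is_face n F" and hl: "is_half_line n F" using F unfolding extreme_rays_def by auto
  obtain C where C: "C \<in> chambers n" and FC: "F = C \<or>
     (\<exists>(c :: nat \<Rightarrow> real) (d :: real). (\<exists>i\<in>{1..n}. c i \<noteq> 0) \<and>
        (\<forall>x\<in>C. lin n c x \<le> d) \<and> (\<exists>x\<in>C. lin n c x = d) \<and> F = {x \<in> C. lin n c x = d})"
    using face unfolding is_face_def lin_def by blast
  obtain x where x: "x \<in> complement_set n" and Cx: "C = Kset n x"
    using C chambers_eq by blast
  have FF: "F = Kset n x \<or> (\<exists>c d. (\<forall>y\<in>Kset n x. lin n c y \<le> d) \<and> (\<exists>y\<in>Kset n x. lin n c y = d)
             \<and> F = {y \<in> Kset n x. lin n c y = d})" using FC Cx by blast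
  note fp = face_props[OF x FF]
  obtain p w where p: "p \<in> Rn n" and w: "w \<in> Rn n" "w \<noteq> (\<lambda>_. 0)"
    and Fe: "F = {(\<lambda>i. p i + t * w i) | t. t \<ge> 0}"
    using hl unfolding is_half_line_def by blast
  have pF: "p \<in> F" using Fe by force
  have "(\<lambda>i. 0 * p i) \<in> F" using fp(2)[OF pF, of 0] by simp
  then obtain t0 where t0: "0 \<le> t0" "(\<lambda>i. 0 * p i) = (\<lambda>i. p i + t0 * w i)" using Fe by auto
  have pe: "p i = - t0 * w i" for i using fun_cong[OF t0(2), of i] by simp
  have qF: "(\<lambda>i. p i + (2 * t0) * w i) \<in> F" using Fe t0 by force
  have q: "(\<lambda>i. p i + (2 * t0) * w i) = (\<lambda>i. t0 * w i)" using pe by (auto simp: algebra_simps)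
  have "(\<lambda>i. t0 * w i) \<in> Kset n x" "(\<lambda>i. - (t0 * w i)) \<in> Kset n x"
    using qF q pF pe fp(1) apply auto[1]
  proof -
    have "p = (\<lambda>i. - (t0 * w i))" using pe by auto
    then show "(\<lambda>i. - (t0 * w i)) \<in> Kset n x" using pF fp(1) by auto
  qed
  then have "(\<lambda>i. t0 * w i) = (\<lambda>_. 0)" using K_pointed[OF x] by blast
  then have "t0 = 0" using w(2) by (metis mult_eq_0_iff)
  then have p0: "p = (\<lambda>_. 0)" using pe by auto
  have Fray: "F = ray w" unfolding Fe ray_def p0 by simp
  have wF: "w \<in> F" unfolding Fray ray_def by (rule CollectI, rule exI[of _ 1]) auto
  have wK: "w \<in> Kset n x" using wF fp(1) by auto
  obtain i0 where i0: "w i0 \<noteq> 0" using w(2) by auto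
  then have "\<not> (i0 < 1 \<or> n < i0)" using w(1) unfolding Rn_def by blast
  then have i0n: "1 \<le> i0" "i0 \<le> n" by auto
  define M where "M = {\<bar>w i\<bar> | i. i \<in> {1..n} \<and> w i \<noteq> 0}"
  have Mfin: "finite M" unfolding M_def by simp
  have Mne: "\<bar>w i0\<bar> \<in> M" using i0 i0n unfolding M_def by auto
  define \<tau> where "\<tau> = Min M"
  have "\<forall>m\<in>M. 0 < m" unfolding M_def by auto
  then have tpos: "0 < \<tau>" unfolding \<tau>_def using Mfin Mne Min_gr_iff by blast
  have tle: "\<tau> \<le> \<bar>w i\<bar>" if "w i \<noteq> 0" for i
  proof -
    have "\<not> (i < 1 \<or> n < i)" using that w(1) unfolding Rn_def by blast
    then have "1 \<le> i \<and> i \<le> n" by auto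
    then have "\<bar>w i\<bar> \<in> M" using that unfolding M_def by auto
    then show ?thesis unfolding \<tau>_def using Mfin by simp
  qed
  define u where "u = (\<lambda>i. sgn (w i))"
  define r where "r = (\<lambda>i. soft \<tau> (w i))"
  have uK: "u \<in> Kset n x" unfolding u_def by (rule K_map[OF wK sgn_mono_real]) (auto simp: sgn_real_def)
  have rK: "r \<in> Kset n x" unfolding r_def
    by (rule K_map[OF wK]) (auto intro: soft_mono soft_odd tpos)
  have wdec: "w = (\<lambda>i. \<tau> * u i + r i)"
  proof
    fix i
    show "w i = \<tau> * u i + r i"
    proof (cases "w i = 0")
      case True then show ?thesis unfolding u_def r_def soft_def using tpos by auto
    next
      case False
      then have "\<tau> \<le> \<bar>w i\<bar>" by (rule tle)
      then show ?thesis unfolding u_def r_def soft_def using tpos False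
        by (auto simp: sgn_real_def)
    qed
  qed
  have uF: "u \<in> F" using fp(3)[OF uK rK tpos] wdec wF by simp
  then obtain s where s: "0 \<le> s" "u = (\<lambda>i. s * w i)" unfolding Fray ray_def by auto
  have "u i0 \<noteq> 0" unfolding u_def using i0 by (simp add: sgn_real_def)
  then have spos: "0 < s" using s by (cases "s = 0") auto
  have Fu: "F = ray u" using Fray ray_scale_eq[OF spos s(2)] by simp
  have wW: "w \<in> Weyl n" using wK unfolding Kset_def by auto
  define a where "a = card {i\<in>{1..n}. 0 < w i}"
  define b where "b = card {i\<in>{1..n}. w i < 0}"
  have uv: "u = vv n a b" and ab: "a + b \<le> n" using sgn_vv[OF wW] unfolding u_def a_def b_def by auto
  have "a + b \<noteq> 0"
  proof
    assume "a + b = 0"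
    then have "u i0 = 0" unfolding uv vv_def by auto
    then show False using \<open>u i0 \<noteq> 0\<close> by simp
  qed
  then have "(a, b) \<in> Estar n" using ab unfolding Estar_def by auto
  then show ?thesis using Fu uv by blast
qed



definition x0 :: "nat \<Rightarrow> nat \<Rightarrow> nat \<Rightarrow> nat \<Rightarrow> real" where
  "x0 n a b i = (if 1 \<le> i \<and> i \<le> n then (if i \<le> a then 5 * real n - real i
      else if i \<le> n - b then real n + 1 - real i else - (2 * real n + real i) - 1/2) else 0)"

lemma x0_bounds:
  assumes ab: "a + b \<le> n" and i: "1 \<le> i" "i \<le> n"
  shows "i \<le> a \<Longrightarrow> x0 n a b i = 5 * real n - real i \<and> 4 * real n \<le> x0 n a b i"
    and "a < i \<Longrightarrow> i \<le> n - b \<Longrightarrow> x0 n a b i = real n + 1 - real i \<and> 1 \<le> x0 n a b i \<and> x0 n a b i \<le> real n"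
    and "n - b < i \<Longrightarrow> x0 n a b i = - (2 * real n + real i) - 1/2 \<and> x0 n a b i \<le> - (2 * real n + 1) - 1/2
         \<and> - (3 * real n) - 1/2 \<le> x0 n a b i"
  using ab i unfolding x0_def by auto

lemma x0_sign:
  assumes ab: "a + b \<le> n" and ij: "1 \<le> i" "i \<le> j" "j \<le> n"
  shows "(0 < x0 n a b i + x0 n a b j \<longleftrightarrow> i \<le> n - b \<and> (i \<le> a \<or> j \<le> n - b))
       \<and> (x0 n a b i + x0 n a b j < 0 \<longleftrightarrow> \<not> (i \<le> n - b \<and> (i \<le> a \<or> j \<le> n - b)))"
proof -
  have j1: "1 \<le> j" using ij by simp
  have rij: "real i \<le> real j" "real j \<le> real n" "1 \<le> real i" "real i \<le> real n" using ij by auto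
  note bi = x0_bounds[OF ab ij(1) order.trans[OF ij(2,3)]]
  note bj = x0_bounds[OF ab j1 ij(3)]
  consider "i \<le> a" | "a < i \<and> i \<le> n - b" | "n - b < i" by linarith
  then show ?thesis
  proof cases
    case 1
    consider "j \<le> a" | "a < j \<and> j \<le> n - b" | "n - b < j" by linarith
    then show ?thesis proof cases
      case 1 then show ?thesis using bi bj \<open>i \<le> a\<close> ab rij by auto
    next
      case 2 then show ?thesis using bi bj \<open>i \<le> a\<close> ab rij by auto
    next
      case 3 then show ?thesis using bi(1)[OF \<open>i \<le> a\<close>] bj(3)[OF 3] \<open>i \<le> a\<close> ab rij by auto
    qed
  next
    case 2
    then have ja: "a < j" using ij by simp
    consider "j \<le> n - b" | "n - b < j" by linarith
    then show ?thesis proof cases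
      case 1 then show ?thesis using bi(2) bj(2)[OF ja 1] 2 rij by auto
    next
      case 3: 2 then show ?thesis using bi(2) bj(3)[OF 3] 2 rij by auto
    qed
  next
    case 3
    then have "n - b < j" using ij by simp
    then show ?thesis using bi(3)[OF 3] bj(3) 3 rij by auto
  qed
qed

lemma x0_comp:
  assumes ab: "a + b \<le> n"
  shows "x0 n a b \<in> complement_set n"
proof -
  have R: "x0 n a b \<in> Rn n" unfolding Rn_def x0_def by auto
  have D: "x0 n a b j < x0 n a b i" if ij: "1 \<le> i" "i < j" "j \<le> n" for i j
  proof -
    have j1: "1 \<le> j" using ij by simp
    have rij: "real i < real j" "real j \<le> real n" "1 \<le> real i" using ij by auto
    note bi = x0_bounds[OF ab ij(1) order.trans[OF less_imp_le[OF ij(2)] ij(3)]]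
    note bj = x0_bounds[OF ab j1 ij(3)]
    consider "j \<le> a" | "i \<le> a \<and> a < j \<and> j \<le> n - b" | "i \<le> a \<and> n - b < j"
      | "a < i \<and> j \<le> n - b" | "a < i \<and> i \<le> n - b \<and> n - b < j" | "n - b < i" by linarith
    then show ?thesis proof cases
      case 1 then show ?thesis using bi(1) bj(1) ij rij by auto
    next
      case 2 then show ?thesis using bi(1) bj(2) rij by auto
    next
      case 3 then show ?thesis using bi(1) bj(3) rij by auto
    next
      case 4 then show ?thesis using bi(2) bj(2) rij ij by auto
    next
      case 5 then show ?thesis using bi(2) bj(3) rij by auto
    next
      case 6 then show ?thesis using bi(3) bj(3) rij ij by auto
    qed
  qed
  have W: "x0 n a b \<in> Weyl0 n" using R D unfolding Weyl0_def by auto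
  show ?thesis unfolding comp_iff using W x0_sign[OF ab]
    by (metis less_irrefl)
qed

definition Qs :: "nat \<Rightarrow> nat \<Rightarrow> nat \<Rightarrow> nat \<Rightarrow> nat \<Rightarrow> bool" where
  "Qs n a b i j \<longleftrightarrow> i \<le> n - b \<and> (i \<le> a \<or> j \<le> n - b)"

lemma K_x0:
  assumes ab: "a + b \<le> n"
  shows "y \<in> Kset n (x0 n a b) \<longleftrightarrow> y \<in> Weyl n \<and> (\<forall>i j. 1 \<le> i \<longrightarrow> i \<le> j \<longrightarrow> j \<le> n \<longrightarrow>
     (Qs n a b i j \<longrightarrow> 0 \<le> y i + y j) \<and> (\<not> Qs n a b i j \<longrightarrow> y i + y j \<le> 0))"
  unfolding Kset_def Qs_def using x0_sign[OF ab] by auto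

lemma vv_vals:
  assumes ab: "a + b \<le> n"
  shows "1 \<le> i \<Longrightarrow> i \<le> a \<Longrightarrow> vv n a b i = 1"
    and "a < i \<Longrightarrow> i \<le> n - b \<Longrightarrow> vv n a b i = 0"
    and "n - b < i \<Longrightarrow> i \<le> n \<Longrightarrow> vv n a b i = -1"
    and "i < 1 \<or> n < i \<Longrightarrow> vv n a b i = 0"
  using ab unfolding vv_def by auto

lemma vv_Rn: "a + b \<le> n \<Longrightarrow> vv n a b \<in> Rn n"
  unfolding Rn_def using vv_vals(4) by blast

lemma vv_nz: assumes "(a, b) \<in> Estar n" shows "vv n a b \<noteq> (\<lambda>_. 0)"
proof
  assume h: "vv n a b = (\<lambda>_. 0)"
  have ab: "a + b \<le> n" "1 \<le> a + b" using assms unfolding Estar_def by auto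
  show False
  proof (cases "1 \<le> a")
    case True then show ?thesis using vv_vals(1)[OF ab(1), of 1] h ab by (simp add: fun_eq_iff)
  next
    case False then show ?thesis using vv_vals(3)[OF ab(1), of n] h ab by (simp add: fun_eq_iff)
  qed
qed

lemma vv_W: assumes ab: "a + b \<le> n" shows "vv n a b \<in> Weyl n"
proof -
  have "vv n a b j \<le> vv n a b i" if "1 \<le> i" "i \<le> j" "j \<le> n" for i j
    using that ab unfolding vv_def by auto
  then show ?thesis unfolding Weyl_def using vv_Rn[OF ab] by auto
qed

lemma vv_K: assumes ab: "a + b \<le> n" shows "vv n a b \<in> Kset n (x0 n a b)"
proof -
  have "(Qs n a b i j \<longrightarrow> 0 \<le> vv n a b i + vv n a b j) \<and> (\<not> Qs n a b i j \<longrightarrow> vv n a b i + vv n a b j \<le> 0)"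
    if "1 \<le> i" "i \<le> j" "j \<le> n" for i j
    using that ab unfolding vv_def Qs_def by auto
  then show ?thesis unfolding K_x0[OF ab] using vv_W[OF ab] by auto
qed

definition phi :: "nat \<Rightarrow> nat \<Rightarrow> nat \<Rightarrow> (nat \<Rightarrow> real) \<Rightarrow> real" where
  "phi n a b y = (if 1 \<le> a then y 1 - y a else 0) + (if 1 \<le> b then y (n - b + 1) - y n else 0)
     + (if a + b < n then y (a + 1) else 0) + (if 1 \<le> a \<and> 1 \<le> b then y a + y (n - b + 1) else 0)"

definition dl :: "nat \<Rightarrow> nat \<Rightarrow> real" where "dl p i = (if i = p then 1 else 0)"

definition c0 :: "nat \<Rightarrow> nat \<Rightarrow> nat \<Rightarrow> nat \<Rightarrow> real" where
  "c0 n a b = (\<lambda>i. - ((if 1 \<le> a then dl 1 i - dl a i else 0) + (if 1 \<le> b then dl (n - b + 1) i - dl n i else 0)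
     + (if a + b < n then dl (a + 1) i else 0) + (if 1 \<le> a \<and> 1 \<le> b then dl a i + dl (n - b + 1) i else 0)))"

lemma lin_neg: "lin n (\<lambda>i. - f i) y = - lin n f y"
  unfolding lin_def by (simp add: sum_negf)
lemma lin_add: "lin n (\<lambda>i. f i + g i) y = lin n f y + lin n g y"
  unfolding lin_def by (simp add: sum.distrib algebra_simps)
lemma lin_diff: "lin n (\<lambda>i. f i - g i) y = lin n f y - lin n g y"
  unfolding lin_def by (simp add: sum_subtractf algebra_simps)
lemma lin_if: "lin n (\<lambda>i. if P then f i else 0) y = (if P then lin n f y else 0)"
  unfolding lin_def by simp
lemma lin_dl:
  assumes y: "y \<in> Rn n" shows "lin n (\<lambda>i. dl p i) y = y p"
proof -
  have "lin n (\<lambda>i. dl p i) y = (\<Sum>i=1..n. if i = p then y p else 0)"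
    unfolding lin_def dl_def by (intro sum.cong) auto
  also have "\<dots> = (if p \<in> {1..n} then y p else 0)" by (rule sum.delta) simp
  also have "\<dots> = y p" using y unfolding Rn_def
    by (cases "p = 0") auto
  finally show ?thesis .
qed

lemma lin_c0: "y \<in> Rn n \<Longrightarrow> lin n (c0 n a b) y = - phi n a b y"
  unfolding c0_def phi_def
  by (simp only: lin_neg lin_add lin_diff lin_if lin_dl)

lemma phi_scale: "phi n a b (\<lambda>i. t * y i) = t * phi n a b y"
  unfolding phi_def by (simp add: algebra_simps)

lemma phi_vv: assumes ab: "a + b \<le> n" shows "phi n a b (vv n a b) = 0"
  using ab unfolding phi_def vv_def by auto

lemma phi_K:
  assumes E: "(a, b) \<in> Estar n" and y: "y \<in> Kset n (x0 n a b)"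
  shows "0 \<le> phi n a b y" and "phi n a b y = 0 \<Longrightarrow> y \<in> ray (vv n a b)"
proof -
  have ab: "a + b \<le> n" "1 \<le> a + b" using E unfolding Estar_def by auto
  have yW: "y \<in> Weyl n" and yQ: "\<And>i j. 1 \<le> i \<Longrightarrow> i \<le> j \<Longrightarrow> j \<le> n \<Longrightarrow>
     (Qs n a b i j \<longrightarrow> 0 \<le> y i + y j) \<and> (\<not> Qs n a b i j \<longrightarrow> y i + y j \<le> 0)"
    using y unfolding K_x0[OF ab(1)] by auto
  have Wd: "\<And>i j. 1 \<le> i \<Longrightarrow> i \<le> j \<Longrightarrow> j \<le> n \<Longrightarrow> y j \<le> y i" using yW unfolding Weyl_def by auto
  have yz: "\<And>i. i < 1 \<or> n < i \<Longrightarrow> y i = 0" using yW unfolding Weyl_def Rn_def by auto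
  have Pm: "\<And>i. 1 \<le> i \<Longrightarrow> i \<le> n - b \<Longrightarrow> 0 \<le> y i"
  proof -
    fix i assume "1 \<le> i" "i \<le> n - b"
    then have "0 \<le> y i + y i" using yQ[of i i] unfolding Qs_def by auto
    then show "0 \<le> y i" by simp
  qed
  have Ng: "\<And>i. n - b < i \<Longrightarrow> i \<le> n \<Longrightarrow> y i \<le> 0"
  proof -
    fix i assume "n - b < i" "i \<le> n"
    then have "y i + y i \<le> 0" using yQ[of i i] unfolding Qs_def by auto
    then show "y i \<le> 0" by simp
  qed
  have PN: "\<And>i j. 1 \<le> i \<Longrightarrow> i \<le> a \<Longrightarrow> n - b < j \<Longrightarrow> j \<le> n \<Longrightarrow> 0 \<le> y i + y j"
    using yQ ab unfolding Qs_def by auto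
  define T1 where "T1 = (if 1 \<le> a then y 1 - y a else 0)"
  define T2 where "T2 = (if 1 \<le> b then y (n - b + 1) - y n else 0)"
  define T3 where "T3 = (if a + b < n then y (a + 1) else 0)"
  define T4 where "T4 = (if 1 \<le> a \<and> 1 \<le> b then y a + y (n - b + 1) else 0)"
  have pe: "phi n a b y = T1 + T2 + T3 + T4" unfolding phi_def T1_def T2_def T3_def T4_def by simp
  have t1: "0 \<le> T1" unfolding T1_def using Wd[of 1 a] ab by auto
  have t2: "0 \<le> T2" unfolding T2_def using Wd[of "n - b + 1" n] ab by auto
  have t3: "0 \<le> T3" unfolding T3_def using Pm[of "a + 1"] ab by auto
  have t4: "0 \<le> T4" unfolding T4_def using PN[of a "n - b + 1"] ab by auto
  show "0 \<le> phi n a b y" using pe t1 t2 t3 t4 by simp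
  assume "phi n a b y = 0"
  then have z: "T1 = 0" "T2 = 0" "T3 = 0" "T4 = 0" using pe t1 t2 t3 t4 by linarith+
  define \<alpha> where "\<alpha> = (if 1 \<le> a then y 1 else - y n)"
  have \<alpha>: "0 \<le> \<alpha>"
  proof (cases "1 \<le> a")
    case True then show ?thesis unfolding \<alpha>_def using Pm[of 1] ab by auto
  next
    case False then show ?thesis unfolding \<alpha>_def using Ng[of n] ab by auto
  qed
  have yv: "y i = \<alpha> * vv n a b i" for i
  proof -
    consider "i < 1 \<or> n < i" | "1 \<le> i \<and> i \<le> a" | "a < i \<and> i \<le> n - b \<and> 1 \<le> i" | "n - b < i \<and> i \<le> n"
      by linarith
    then show ?thesis
    proof cases
      case 1 then show ?thesis using yz vv_vals(4)[OF ab(1)] by auto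
    next
      case 2
      have "y i \<le> y 1" "y a \<le> y i" using Wd[of 1 i] Wd[of i a] 2 ab by auto
      then have "y i = y 1" using z(1) 2 unfolding T1_def by auto
      then show ?thesis using 2 vv_vals(1)[OF ab(1)] unfolding \<alpha>_def by auto
    next
      case 3
      then have "a + b < n" by linarith
      then have "y (a + 1) = 0" using z(3) unfolding T3_def by auto
      moreover have "y i \<le> y (a + 1)" using Wd[of "a + 1" i] 3 ab by auto
      moreover have "0 \<le> y i" using Pm[of i] 3 by auto
      ultimately have "y i = 0" by linarith
      then show ?thesis using 3 vv_vals(2)[OF ab(1)] by auto
    next
      case 4
      then have b1: "1 \<le> b" by linarith
      have "y i \<le> y (n - b + 1)" "y n \<le> y i" using Wd[of "n - b + 1" i] Wd[of i n] 4 ab by auto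
      then have yi: "y i = y n" "y i = y (n - b + 1)" using z(2) b1 unfolding T2_def by auto
      have vi: "vv n a b i = -1" using vv_vals(3)[OF ab(1)] 4 by auto
      show ?thesis
      proof (cases "1 \<le> a")
        case True
        have "y a + y (n - b + 1) = 0" using z(4) True b1 unfolding T4_def by auto
        moreover have "y a = y 1" using z(1) True unfolding T1_def by auto
        ultimately show ?thesis using yi vi True unfolding \<alpha>_def by auto
      next
        case False
        then show ?thesis using yi vi unfolding \<alpha>_def by auto
      qed
    qed
  qed
  show "y \<in> ray (vv n a b)" unfolding ray_def using \<alpha> yv by auto
qed

lemma vv_extreme:
  assumes E: "(a, b) \<in> Estar n"
  shows "ray (vv n a b) \<in> extreme_rays n"
proof -
  have ab: "a + b \<le> n" "1 \<le> a + b" using E unfolding Estar_def by auto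
  let ?v = "vv n a b" and ?K = "Kset n (x0 n a b)"
  have hl: "is_half_line n (ray ?v)"
  proof -
    have "ray ?v = {(\<lambda>i. (\<lambda>_. 0::real) i + t * ?v i) |t. 0 \<le> t}" unfolding ray_def by simp
    moreover have "(\<lambda>_. 0::real) \<in> Rn n" unfolding Rn_def by simp
    ultimately show ?thesis unfolding is_half_line_def
      apply -
      apply (rule bexI[where x="\<lambda>_. 0"])
       apply (rule bexI[where x="?v"])
      using vv_Rn[OF ab(1)] vv_nz[OF E] by auto
  qed
  have C: "?K \<in> chambers n" unfolding chambers_eq using x0_comp[OF ab(1)] by blast
  have rK: "ray ?v = {y \<in> ?K. phi n a b y = 0}"
  proof
    show "ray ?v \<subseteq> {y \<in> ?K. phi n a b y = 0}"
    proof
      fix z assume "z \<in> ray ?v"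
      then obtain t where t: "0 \<le> t" "z = (\<lambda>i. t * ?v i)" unfolding ray_def by auto
      then show "z \<in> {y \<in> ?K. phi n a b y = 0}"
        using K_scale[OF vv_K[OF ab(1)] t(1)] phi_scale phi_vv[OF ab(1)] by auto
    qed
    show "{y \<in> ?K. phi n a b y = 0} \<subseteq> ray ?v" using phi_K(2)[OF E] by auto
  qed
  have face: "is_face n (ray ?v)"
  proof (cases "\<exists>i\<in>{1..n}. c0 n a b i \<noteq> 0")
    case True
    have lc: "\<And>y. y \<in> ?K \<Longrightarrow> (\<Sum>i=1..n. c0 n a b i * y i) = - phi n a b y"
      using lin_c0 K_Rn unfolding lin_def by blast
    show ?thesis unfolding is_face_def
    proof (rule bexI[OF _ C], rule disjI2, intro exI conjI)
      show "\<exists>i\<in>{1..n}. c0 n a b i \<noteq> 0" by (rule True)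
      show "\<forall>x\<in>?K. (\<Sum>i=1..n. c0 n a b i * x i) \<le> 0" using lc phi_K(1)[OF E] by auto
      show "\<exists>x\<in>?K. (\<Sum>i=1..n. c0 n a b i * x i) = 0"
        using lc vv_K[OF ab(1)] phi_vv[OF ab(1)] by auto
      show "ray ?v = {x \<in> ?K. (\<Sum>i=1..n. c0 n a b i * x i) = 0}" unfolding rK using lc by auto
    qed
  next
    case False
    have "\<And>y. y \<in> ?K \<Longrightarrow> phi n a b y = 0"
    proof -
      fix y assume y: "y \<in> ?K"
      have "lin n (c0 n a b) y = 0" unfolding lin_def using False by simp
      then show "phi n a b y = 0" using lin_c0[OF K_Rn[OF y]] by simp
    qed
    then have "ray ?v = ?K" unfolding rK by auto
    then show ?thesis unfolding is_face_def using C by blast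
  qed
  show ?thesis unfolding extreme_rays_def using face hl by auto
qed



lemma vv_sets:
  assumes ab: "a + b \<le> n"
  shows "{i\<in>{1..n}. 0 < vv n a b i} = {1..a}" and "{i\<in>{1..n}. vv n a b i < 0} = {n - b<..n}"
  using ab unfolding vv_def by auto

lemma vv_in_ray: "v \<in> ray v" unfolding ray_def by (rule CollectI, rule exI[of _ 1]) auto

lemma vv_inj:
  assumes E: "(a, b) \<in> Estar n" "(a', b') \<in> Estar n" and r: "ray (vv n a b) = ray (vv n a' b')"
  shows "a = a' \<and> b = b'"
proof -
  have ab: "a + b \<le> n" "a' + b' \<le> n" using E unfolding Estar_def by auto
  have "vv n a b \<in> ray (vv n a' b')" using r vv_in_ray by blast
  then obtain t where t: "0 \<le> t" "vv n a b = (\<lambda>i. t * vv n a' b' i)" unfolding ray_def by auto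
  have "t \<noteq> 0" using t vv_nz[OF E(1)] by auto
  then have tp: "0 < t" using t by simp
  have P: "{i\<in>{1..n}. 0 < vv n a b i} = {i\<in>{1..n}. 0 < vv n a' b' i}"
    using tp t(2) by (auto simp: zero_less_mult_iff)
  have N: "{i\<in>{1..n}. vv n a b i < 0} = {i\<in>{1..n}. vv n a' b' i < 0}"
    using tp t(2) by (auto simp: mult_less_0_iff)
  have A: "{1..a} = {1..a'}" using P vv_sets(1)[OF ab(1)] vv_sets(1)[OF ab(2)] by simp
  have B: "{n - b<..n} = {n - b'<..n}" using N vv_sets(2)[OF ab(1)] vv_sets(2)[OF ab(2)] by simp
  have "card {1..a} = card {1..a'}" using A by (rule arg_cong)
  moreover have "card {n - b<..n} = card {n - b'<..n}" using B by (rule arg_cong)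
  ultimately show ?thesis using ab by simp
qed

lemma partA: "bij_betw (\<lambda>(a, b). ray (vv n a b)) (Estar n) (extreme_rays n)"
  unfolding bij_betw_def
proof
  show "inj_on (\<lambda>(a, b). ray (vv n a b)) (Estar n)"
    unfolding inj_on_def using vv_inj by fast
  show "(\<lambda>(a, b). ray (vv n a b)) ` Estar n = extreme_rays n"
  proof
    show "(\<lambda>(a, b). ray (vv n a b)) ` Estar n \<subseteq> extreme_rays n" using vv_extreme by auto
    show "extreme_rays n \<subseteq> (\<lambda>(a, b). ray (vv n a b)) ` Estar n"
    proof
      fix F assume "F \<in> extreme_rays n"
      then obtain a b where "(a, b) \<in> Estar n" "F = ray (vv n a b)" using extreme_char by blast
      then show "F \<in> (\<lambda>(a, b). ray (vv n a b)) ` Estar n" by force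
    qed
  qed
qed

lemma sel_facts:
  assumes fin: "finite S"
  shows "\<And>i. 1 \<le> i \<Longrightarrow> i \<le> card S \<Longrightarrow> Sel S i \<in> S"
    and "\<And>i j. 1 \<le> i \<Longrightarrow> i < j \<Longrightarrow> j \<le> card S \<Longrightarrow> Sel S j < Sel S i"
    and "S = Sel S ` {1..card S}"
proof -
  define L where "L = rev (sorted_list_of_set S)"
  have len: "length L = card S" unfolding L_def by simp
  have set: "set L = S" unfolding L_def using fin by simp
  have sw: "sorted_wrt (>) L" unfolding L_def sorted_wrt_rev
    using sorted_list_of_set.strict_sorted_key_list_of_set[of S] by simp
  have sel: "Sel S i = L ! (i - 1)" for i unfolding Sel_def L_def by simp
  show m: "\<And>i. 1 \<le> i \<Longrightarrow> i \<le> card S \<Longrightarrow> Sel S i \<in> S"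
    unfolding sel using set len by (metis Suc_le_eq Suc_pred' diff_less less_le_trans nth_mem zero_less_one)
  show lt: "\<And>i j. 1 \<le> i \<Longrightarrow> i < j \<Longrightarrow> j \<le> card S \<Longrightarrow> Sel S j < Sel S i"
  proof -
    fix i j :: nat assume "1 \<le> i" "i < j" "j \<le> card S"
    then have "i - 1 < j - 1" "j - 1 < length L" using len by auto
    then show "Sel S j < Sel S i" unfolding sel using sorted_wrt_nth_less[OF sw] by blast
  qed
  show "S = Sel S ` {1..card S}"
  proof
    show "Sel S ` {1..card S} \<subseteq> S" using m by auto
    show "S \<subseteq> Sel S ` {1..card S}"
    proof
      fix x assume "x \<in> S"
      then obtain p where p: "p < length L" "L ! p = x" using set by (metis in_set_conv_nth)
      then have "Sel S (p + 1) = x" "p + 1 \<in> {1..card S}" unfolding sel using len by auto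
      then show "x \<in> Sel S ` {1..card S}" by (metis image_eqI)
    qed
  qed
qed

lemma sel_gap:
  assumes fin: "finite S" and ij: "1 \<le> i" "i \<le> j" "j \<le> card S"
  shows "Sel S j + (j - i) \<le> Sel S i"
  using ij
proof (induction j)
  case 0 then show ?case by simp
next
  case (Suc j)
  show ?case
  proof (cases "i = Suc j")
    case True then show ?thesis by simp
  next
    case False
    then have "i \<le> j" using Suc by simp
    then have "Sel S j + (j - i) \<le> Sel S i" using Suc by simp
    moreover have "Sel S (Suc j) < Sel S j" using sel_facts(2)[OF fin, of j "Suc j"] Suc \<open>i \<le> j\<close> by simp
    ultimately show ?thesis using \<open>i \<le> j\<close> by simp
  qed
qed

lemma pi_char:
  assumes fin: "finite S"
  shows "card (S \<inter> {\<theta>..}) \<le> card S"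
    and "\<And>i. 1 \<le> i \<Longrightarrow> i \<le> card S \<Longrightarrow> (\<theta> \<le> Sel S i \<longleftrightarrow> i \<le> card (S \<inter> {\<theta>..}))"
proof -
  let ?k = "card S" and ?s = "Sel S"
  have inj: "inj_on ?s {1..?k}"
  proof (rule inj_onI)
    fix i j assume "i \<in> {1..?k}" "j \<in> {1..?k}" "?s i = ?s j"
    then show "i = j" using sel_facts(2)[OF fin, of i j] sel_facts(2)[OF fin, of j i]
      by (metis atLeastAtMost_iff linorder_neqE_nat less_irrefl)
  qed
  define T where "T = {i\<in>{1..?k}. \<theta> \<le> ?s i}"
  have "S \<inter> {\<theta>..} = ?s ` T"
  proof
    show "?s ` T \<subseteq> S \<inter> {\<theta>..}" unfolding T_def using sel_facts(1)[OF fin] by auto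
    show "S \<inter> {\<theta>..} \<subseteq> ?s ` T"
    proof
      fix x assume x: "x \<in> S \<inter> {\<theta>..}"
      then obtain i where "i \<in> {1..?k}" "x = ?s i" using sel_facts(3)[OF fin] by blast
      then show "x \<in> ?s ` T" unfolding T_def using x by auto
    qed
  qed
  moreover have TS: "T \<subseteq> {1..?k}" unfolding T_def by auto
  ultimately have cT: "card (S \<inter> {\<theta>..}) = card T"
    using card_image[OF inj_on_subset[OF inj TS]] by simp
  have Te: "T = {1..card T}"
  proof (rule init_seg[of _ ?k])
    show "T \<subseteq> {1..?k}" unfolding T_def by auto
    fix i j assume "i \<in> T" "1 \<le> j" "j \<le> i"
    then show "j \<in> T" unfolding T_def using sel_gap[OF fin, of j i] by auto
  qed
  show "card (S \<inter> {\<theta>..}) \<le> card S" unfolding cT using card_mono[OF _ TS] by simp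
  fix i assume "1 \<le> i" "i \<le> card S"
  then show "\<theta> \<le> Sel S i \<longleftrightarrow> i \<le> card (S \<inter> {\<theta>..})"
    unfolding cT using Te unfolding T_def by (metis (no_types, lifting) atLeastAtMost_iff mem_Collect_eq)
qed

lemma CS_vv:
  assumes S: "S \<subseteq> {1..n}" and E: "(a, b) \<in> Estar n"
  shows "vv n a b \<in> CS n S \<longleftrightarrow> a = piS n S (a + b)"
proof -
  have fin: "finite S" using S finite_subset by blast
  have ab: "a + b \<le> n" "1 \<le> a + b" using E unfolding Estar_def by auto
  let ?k = "card S" and ?s = "Sel S" and ?v = "vv n a b"
  define c where "c = n - b"
  define \<theta> where "\<theta> = n - (a + b) + 1"
  have c\<theta>: "\<theta> = c - a + 1" "a \<le> c" "c \<le> n" unfolding c_def \<theta>_def using ab by auto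
  define \<pi> where "\<pi> = piS n S (a + b)"
  have \<pi>e: "\<pi> = card (S \<inter> {\<theta>..})" unfolding \<pi>_def piS_def \<theta>_def by simp
  have F1: "\<And>i. 1 \<le> i \<Longrightarrow> i \<le> ?k \<Longrightarrow> (\<theta> \<le> ?s i \<longleftrightarrow> i \<le> \<pi>)" using pi_char(2)[OF fin] \<pi>e by simp
  have F1k: "\<pi> \<le> ?k" using pi_char(1)[OF fin] \<pi>e by simp
  have F2: "\<And>i j. 1 \<le> i \<Longrightarrow> i \<le> j \<Longrightarrow> j \<le> ?k \<Longrightarrow> ?s j + (j - i) \<le> ?s i" using sel_gap[OF fin] by blast
  have F3: "\<And>i. 1 \<le> i \<Longrightarrow> i \<le> ?k \<Longrightarrow> 1 \<le> ?s i \<and> ?s i \<le> n" using sel_facts(1)[OF fin] S by force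
  have v1: "\<And>i. 1 \<le> i \<Longrightarrow> i \<le> a \<Longrightarrow> ?v i = 1" using vv_vals(1)[OF ab(1)] by blast
  have v0: "\<And>i. a < i \<Longrightarrow> i \<le> c \<Longrightarrow> ?v i = 0" using vv_vals(2)[OF ab(1)] unfolding c_def by blast
  have vm: "\<And>i. c < i \<Longrightarrow> i \<le> n \<Longrightarrow> ?v i = -1" using vv_vals(3)[OF ab(1)] unfolding c_def by blast
  define pl where "pl i j \<longleftrightarrow> i \<le> ?k \<and> j + 1 \<le> i + ?s i" for i j
  have CSe: "?v \<in> CS n S \<longleftrightarrow> (\<forall>i j. 1 \<le> i \<longrightarrow> i \<le> j \<longrightarrow> j \<le> n \<longrightarrow>
      (pl i j \<longrightarrow> 0 \<le> ?v i + ?v j) \<and> (\<not> pl i j \<longrightarrow> ?v i + ?v j \<le> 0))"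
    unfolding CS_def pl_def using vv_W[OF ab(1)] by auto
  show ?thesis
  proof
    assume "?v \<in> CS n S"
    then have H: "\<And>i j. 1 \<le> i \<Longrightarrow> i \<le> j \<Longrightarrow> j \<le> n \<Longrightarrow>
      (pl i j \<longrightarrow> 0 \<le> ?v i + ?v j) \<and> (\<not> pl i j \<longrightarrow> ?v i + ?v j \<le> 0)" unfolding CSe by blast
    have le1: "a \<le> \<pi>"
    proof (cases "a = 0")
      case False
      then have a1: "1 \<le> a" by simp
      have "0 < ?v a + ?v c"
      proof (cases "a = c")
        case True then show ?thesis using v1[OF a1] by simp
      next
        case False then show ?thesis using v1[OF a1] v0[of c] c\<theta> by simp
      qed
      then have "pl a c" using H[of a c] a1 c\<theta> by auto
      then have "a \<le> ?k" "\<theta> \<le> ?s a" unfolding pl_def using c\<theta> by auto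
      then show ?thesis using F1[OF a1] by simp
    qed simp
    have le2: "\<pi> \<le> a"
    proof (rule ccontr)
      assume "\<not> \<pi> \<le> a"
      then have ak: "a + 1 \<le> ?k" and sa: "\<theta> \<le> ?s (a + 1)" using F1[of "a + 1"] F1k by auto
      show False
      proof (cases "1 \<le> b")
        case True
        then have cn: "c < n" unfolding c_def using ab by simp
        show False
        proof (cases "a + 1 \<le> c")
          case False
          then have "?v (a + 1) + ?v (a + 1) < 0" using vm[of "a + 1"] c\<theta> cn by simp
          then have "\<not> pl (a + 1) (a + 1)" using H[of "a + 1" "a + 1"] c\<theta> cn by auto
          then show False using ak F3[of "a + 1"] unfolding pl_def by auto
        next
          case True
          then have "?v (a + 1) + ?v (c + 1) < 0" using v0[of "a + 1"] vm[of "c + 1"] cn by simp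
          then have "\<not> pl (a + 1) (c + 1)" using H[of "a + 1" "c + 1"] True cn by auto
          then show False using ak sa c\<theta> unfolding pl_def by auto
        qed
      next
        case False
        then have "b = 0" by simp
        then have "\<theta> = n - a + 1" unfolding \<theta>_def by simp
        moreover have "?s (a + 1) + a \<le> ?s 1" using F2[of 1 "a + 1"] ak by simp
        moreover have "?s 1 \<le> n" using F3[of 1] ak by simp
        ultimately show False using sa by linarith
      qed
    qed
    show "a = piS n S (a + b)" using le1 le2 unfolding \<pi>_def by simp
  next
    assume "a = piS n S (a + b)"
    then have a\<pi>: "a = \<pi>" unfolding \<pi>_def by simp
    have ak: "a \<le> ?k" using a\<pi> F1k by simp
    have sa: "a + 1 \<le> ?k \<Longrightarrow> ?s (a + 1) < \<theta>" using F1[of "a + 1"] a\<pi> by auto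
    have sa2: "1 \<le> a \<Longrightarrow> \<theta> \<le> ?s a" using F1[of a] a\<pi> ak by auto
    show "?v \<in> CS n S" unfolding CSe
    proof (intro allI impI)
      fix i j assume ij: "1 \<le> i" "i \<le> j" "j \<le> n"
      consider "i \<le> a" | "a < i \<and> i \<le> c" | "c < i" by linarith
      then show "(pl i j \<longrightarrow> 0 \<le> ?v i + ?v j) \<and> (\<not> pl i j \<longrightarrow> ?v i + ?v j \<le> 0)"
      proof cases
        case 1
        have vi: "?v i = 1" using v1 ij 1 by simp
        show ?thesis
        proof (cases "j \<le> c")
          case True
          have "?s a + (a - i) \<le> ?s i" using F2[of i a] ij 1 ak by simp
          then have "pl i j" unfolding pl_def using sa2 ij 1 ak True c\<theta> by auto
          moreover have "-1 \<le> ?v j" unfolding vv_def by auto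
          ultimately show ?thesis using vi by auto
        next
          case False
          then show ?thesis using vi vm[of j] ij by simp
        qed
      next
        case 2
        have vi: "?v i = 0" using v0 2 by simp
        show ?thesis
        proof (cases "j \<le> c")
          case True
          then show ?thesis using vi v0[of j] 2 ij by simp
        next
          case False
          have "\<not> pl i j"
          proof
            assume p: "pl i j"
            then have ik: "i \<le> ?k" unfolding pl_def by simp
            have "?s i + (i - (a + 1)) \<le> ?s (a + 1)" using F2[of "a + 1" i] 2 ik by simp
            then show False using p sa[OF order.trans[OF _ ik]] 2 False c\<theta> unfolding pl_def by auto
          qed
          then show ?thesis using vi vm[of j] False ij by simp
        qed
      next
        case 3
        have "\<not> pl i j"
        proof
          assume p: "pl i j"
          then have ik: "i \<le> ?k" unfolding pl_def by simp
          have "?s ?k + (?k - (a + 1)) \<le> ?s (a + 1)" using F2[of "a + 1" ?k] 3 ik c\<theta> by simp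
          moreover have "1 \<le> ?s ?k" using F3[of ?k] ik 3 by auto
          ultimately show False using sa 3 ik c\<theta> by auto
        qed
        then show ?thesis using vm[of i] vm[of j] 3 ij by simp
      qed
    qed
  qed
qed

lemma CS_scale:
  assumes v: "v \<in> CS n S" and t: "0 \<le> t"
  shows "(\<lambda>i. t * v i) \<in> CS n S"
proof -
  have W: "(\<lambda>i. t * v i) \<in> Weyl n" using v t unfolding CS_def Weyl_def Rn_def
    by (auto intro: mult_left_mono)
  show ?thesis using v W t unfolding CS_def
    by (auto simp: distrib_left[symmetric] mult_nonneg_nonpos split: if_splits)
qed

lemma ray_sub_CS: "ray v \<subseteq> CS n S \<longleftrightarrow> v \<in> CS n S"
  using vv_in_ray CS_scale unfolding ray_def by blast

lemma partB:
  assumes S: "S \<subseteq> {1..n}"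
  shows "{r \<in> extreme_rays n. r \<subseteq> CS n S} = (\<lambda>l. ray (vv n (piS n S l) (l - piS n S l))) ` {1..n}"
proof
  show "{r \<in> extreme_rays n. r \<subseteq> CS n S} \<subseteq> (\<lambda>l. ray (vv n (piS n S l) (l - piS n S l))) ` {1..n}"
  proof
    fix r assume r: "r \<in> {r \<in> extreme_rays n. r \<subseteq> CS n S}"
    then obtain a b where E: "(a, b) \<in> Estar n" and re: "r = ray (vv n a b)" using extreme_char by blast
    have "vv n a b \<in> CS n S" using r re ray_sub_CS by auto
    then have a: "a = piS n S (a + b)" using CS_vv[OF S E] by simp
    have "a + b \<in> {1..n}" using E unfolding Estar_def by auto
    moreover have "r = ray (vv n (piS n S (a + b)) ((a + b) - piS n S (a + b)))" using re a by simp
    ultimately show "r \<in> (\<lambda>l. ray (vv n (piS n S l) (l - piS n S l))) ` {1..n}" by blast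
  qed
  show "(\<lambda>l. ray (vv n (piS n S l) (l - piS n S l))) ` {1..n} \<subseteq> {r \<in> extreme_rays n. r \<subseteq> CS n S}"
  proof
    fix r assume "r \<in> (\<lambda>l. ray (vv n (piS n S l) (l - piS n S l))) ` {1..n}"
    then obtain l where l: "l \<in> {1..n}" and re: "r = ray (vv n (piS n S l) (l - piS n S l))" by blast
    have "S \<inter> {n - l + 1..} \<subseteq> {n - l + 1..n}" using S by auto
    then have "piS n S l \<le> card {n - l + 1..n}" unfolding piS_def by (intro card_mono) auto
    then have pl: "piS n S l \<le> l" using l by simp
    let ?a = "piS n S l" and ?b = "l - piS n S l"
    have sum: "?a + ?b = l" using pl by simp
    have E: "(?a, ?b) \<in> Estar n" unfolding Estar_def using sum l by auto
    have "vv n ?a ?b \<in> CS n S" using CS_vv[OF S E] sum by simp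
    then show "r \<in> {r \<in> extreme_rays n. r \<subseteq> CS n S}"
      using re vv_extreme[OF E] ray_sub_CS by auto
  qed
qed

theorem theorem1p21:
  fixes n :: nat
  shows "bij_betw (\<lambda>(a, b). ray (vv n a b)) (Estar n) (extreme_rays n) \<and>
    (\<forall>S. S \<subseteq> {1..n} \<longrightarrow>
       {r \<in> extreme_rays n. r \<subseteq> CS n S} =
       (\<lambda>l. ray (vv n (piS n S l) (l - piS n S l))) ` {1..n})"
  using partA partB by blast

end
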